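(* Let $p$ be a prime, $a$ a positive integer and $N=p^a$. For $j\in\{0,1,\dots,N-1\}$ let $x_j=(x_{0,j},x_{1,j},\dots,x_{N-1,j})\in\mathbb{Z}_p^{N}$ where $x_{i,j}=\binom{i}{j}\bmod p$. Then for every $j$ and every cyclic shift $x'_j$ of $x_j$ (i.e. $x'_j=(x_{k,j},x_{k+1,j},\dots,x_{k-1,j})$ for some $k$, indices mod $N$), the difference $x_j-x'_j$ is a $\mathbb{Z}_p$-linear combination of $x_0,x_1,\dots,x_{j-1}$ (for $j=0$ this means $x_0-x'_0=0$). *)

theory Defs
  imports "HOL-Number_Theory.Number_Theory"
begin

text \<open>The vector x_j in (Z/pZ)^N, represented by its coordinates as integers in
  {0..p-1}: coordinate i (for 0 \<le> i < N) is (i choose j) mod p.\<close>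
definition binom_vec :: "nat \<Rightarrow> nat \<Rightarrow> nat \<Rightarrow> int" where
  "binom_vec p j i = int ((i choose j) mod p)"

definition cyc_shift :: "nat \<Rightarrow> nat \<Rightarrow> (nat \<Rightarrow> int) \<Rightarrow> nat \<Rightarrow> int" where
  "cyc_shift N k x i = x ((i + k) mod N)"

end

theory Submission
  imports Defs
begin

lemma p_dvd_choose_pow:
  fixes p a t :: nat
  assumes "prime p" "0 < t" "t < p ^ a"
  shows "p dvd (p ^ a choose t)"
proof (rule ccontr)
  assume nd: "\<not> p dvd (p ^ a choose t)"
  have "t * (p ^ a choose t) = p ^ a * ((p ^ a - 1) choose (t - 1))"
    using times_binomial_minus1_eq[OF assms(2)] by simp
  hence "p ^ a dvd t * (p ^ a choose t)" by simp
  moreover have "coprime (p ^ a) (p ^ a choose t)"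
    using nd assms(1) by (simp add: prime_imp_coprime)
  ultimately have "p ^ a dvd t" using coprime_dvd_mult_left_iff by blast
  with assms(2,3) show False by (simp add: nat_dvd_not_less)
qed

lemma choose_shift_N:
  fixes p a j m :: nat
  assumes "prime p" "j < p ^ a"
  shows "[int ((m + p ^ a) choose j) = int (m choose j)] (mod int p)"
proof -
  have "(m + p ^ a) choose j = (\<Sum>l\<le>j. (m choose l) * (p ^ a choose (j - l)))"
    using vandermonde[of m "p ^ a" j] by simp
  also have "\<dots> = (\<Sum>l<j. (m choose l) * (p ^ a choose (j - l))) + (m choose j)"
    by (simp add: lessThan_Suc_atMost[symmetric])
  finally have eq: "(m + p ^ a) choose j = (\<Sum>l<j. (m choose l) * (p ^ a choose (j - l))) + (m choose j)" .
  have "p dvd (\<Sum>l<j. (m choose l) * (p ^ a choose (j - l)))"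
  proof (rule dvd_sum)
    fix l assume "l \<in> {..<j}"
    hence "0 < j - l" "j - l < p ^ a" using assms(2) by auto
    thus "p dvd (m choose l) * (p ^ a choose (j - l))"
      using p_dvd_choose_pow[OF assms(1)] by simp
  qed
  hence "[(m + p ^ a) choose j = m choose j] (mod p)"
    unfolding eq by (auto simp: cong_def elim!: dvdE)
  thus ?thesis by (simp add: cong_int_iff)
qed

lemma choose_mod_N:
  fixes p a j m :: nat
  assumes "prime p" "j < p ^ a"
  shows "[int (m choose j) = int ((m mod p ^ a) choose j)] (mod int p)"
proof -
  have "\<And>q. [int ((r + q * p ^ a) choose j) = int (r choose j)] (mod int p)" for r
  proof -
    fix q show "[int ((r + q * p ^ a) choose j) = int (r choose j)] (mod int p)"
    proof (induction q)
      case 0 then show ?case by simp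
    next
      case (Suc q)
      have "[int ((r + Suc q * p ^ a) choose j) = int ((r + q * p ^ a) choose j)] (mod int p)"
        using choose_shift_N[OF assms, of "r + q * p ^ a"] by (simp add: algebra_simps)
      then show ?case using Suc cong_trans by blast
    qed
  qed
  from this[of "m mod p ^ a" "m div p ^ a"] show ?thesis
    by (simp add: mod_div_mult_eq)
qed

theorem claim4p2:
  fixes p a j k :: nat
  assumes "prime p" and "0 < a" and "j < p ^ a"
  shows "\<exists>c :: nat \<Rightarrow> int. \<forall>i < p ^ a.
           [binom_vec p j i - cyc_shift (p ^ a) k (binom_vec p j) i
              = (\<Sum>l<j. c l * binom_vec p l i)] (mod int p)"
proof (intro exI allI impI)
  fix i assume i: "i < p ^ a"
  have bv: "[binom_vec p l n = int (n choose l)] (mod int p)" for l n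
    unfolding binom_vec_def by (simp add: cong_def zmod_int)
  have "(i + k) choose j = (\<Sum>l\<le>j. (i choose l) * (k choose (j - l)))"
    using vandermonde[of i k j] by simp
  also have "\<dots> = (\<Sum>l<j. (i choose l) * (k choose (j - l))) + (i choose j)"
    by (simp add: lessThan_Suc_atMost[symmetric])
  finally have eq: "int ((i + k) choose j) = (\<Sum>l<j. int (i choose l) * int (k choose (j - l))) + int (i choose j)"
    by simp
  have "[binom_vec p j i - cyc_shift (p ^ a) k (binom_vec p j) i
         = int (i choose j) - int ((i + k) choose j)] (mod int p)"
  proof -
    have "[cyc_shift (p ^ a) k (binom_vec p j) i = int ((i + k) choose j)] (mod int p)"
      unfolding cyc_shift_def
      using cong_trans[OF bv cong_sym[OF choose_mod_N[OF assms(1,3)]]] .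
    thus ?thesis using bv by (intro cong_diff) auto
  qed
  also have "int (i choose j) - int ((i + k) choose j) = (\<Sum>l<j. (- int (k choose (j - l))) * int (i choose l))"
    unfolding eq by (simp add: sum_negf algebra_simps)
  also have "[\<dots> = (\<Sum>l<j. (- int (k choose (j - l))) * binom_vec p l i)] (mod int p)"
    by (intro cong_sum cong_mult cong_refl cong_sym[OF bv])
  finally show "[binom_vec p j i - cyc_shift (p ^ a) k (binom_vec p j) i
              = (\<Sum>l<j. (\<lambda>l. - int (k choose (j - l))) l * binom_vec p l i)] (mod int p)" by simp
qed

end
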